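(* There is a one-pass streaming algorithm in the VA model which, given $\varepsilon\in(0,1)$ and an integer $T\ge 1$, and given as input stream a graph $G=(V,E)$ with $|V|=n$ together with a coloring $f:V\to[C]$ satisfying the promise $|E_M|\ge T$, outputs an estimate $\widehat m$ with $|\widehat m-|E_M||\le\varepsilon|E_M|$ with high probability. With high probability it uses $\widetilde{\mathcal O}\!\left(\min\left\{|V|,\frac{|V|^2}{T}\right\}\right)$ space.
   Context: Graphs are simple and undirected, $|V|=n$, $|E|=m$. A coloring $f:V\to[C]$ is given, where $[C]=\{1,\dots,C\}$. An edge $(u,v)$ is monochromatic (conflicting) if $f(u)=f(v)$, and $E_M\subseteq E$ denotes the set of monochromatic edges. VA (Vertex Arrival) streaming model: the vertex identities $V=\{v_1,\dots,v_n\}$ are known to the algorithm in advance. The vertices are revealed one at a time in an arbitrary order that is unknown in advance. When a vertex $v$ is revealed, its color $f(v)$ is revealed, and then all edges between $v$ and previously revealed vertices are revealed one by one. The color of a previously revealed vertex is not revealed again, so the algorithm knows $f(u)$ for an earlier vertex $u$ only if it stored it. "With high probability" means with probability at least $1-1/n^{c}$ for an absolute constant $c>0$. $\widetilde{\mathcal O}(\cdot)$ hides factors polynomial in $\log n$ and $1/\varepsilon$. Space is counted in words of $O(\log n)$ bits. *)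

theory Defs
  imports "HOL-Probability.Probability"
begin

text \<open>Vertices are 0..<n (identities known in advance).
  A stream item is either the arrival of a vertex together with its colour,
  or an edge between an earlier revealed vertex u and the current vertex v.\<close>

datatype va_item = Vtx nat nat | Edg nat nat

definition simple_graph :: "nat \<Rightarrow> nat set set \<Rightarrow> bool" where
  "simple_graph n E \<longleftrightarrow> (\<forall>e\<in>E. \<exists>u v. e = {u, v} \<and> u \<noteq> v \<and> u < n \<and> v < n)"

definition coloring :: "nat \<Rightarrow> nat \<Rightarrow> (nat \<Rightarrow> nat) \<Rightarrow> bool" where
  "coloring n C f \<longleftrightarrow> (\<forall>v<n. f v \<in> {1..C})"

definition mono_edges :: "nat set set \<Rightarrow> (nat \<Rightarrow> nat) \<Rightarrow> nat set set" where
  "mono_edges E f = {e \<in> E. \<exists>u v. e = {u, v} \<and> f u = f v}"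

text \<open>The valid VA streams for (G,f): the vertices arrive in an arbitrary order
  sigma; when vertex sigma!i arrives, its colour is revealed, then all edges to
  previously revealed vertices are revealed one by one, in an arbitrary order L i.\<close>
definition va_stream :: "nat \<Rightarrow> nat set set \<Rightarrow> (nat \<Rightarrow> nat) \<Rightarrow> va_item list \<Rightarrow> bool" where
  "va_stream n E f s \<longleftrightarrow>
     (\<exists>(\<sigma>::nat list) (L::nat \<Rightarrow> nat list).
        distinct \<sigma> \<and> set \<sigma> = {0..<n} \<and>
        (\<forall>i<n. distinct (L i) \<and>
               set (L i) = {u \<in> set (take i \<sigma>). {u, \<sigma> ! i} \<in> E}) \<and>
        s = concat (map (\<lambda>i. Vtx (\<sigma> ! i) (f (\<sigma> ! i)) # map (\<lambda>u. Edg u (\<sigma> ! i)) (L i))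
                        [0..<n]))"

text \<open>Run of a randomized one-pass streaming algorithm with (probabilistic)
  transition function upd: returns the distribution of the whole trace of
  memory states (initial state first, final state last).\<close>
fun va_run :: "('s \<Rightarrow> 'i \<Rightarrow> 's pmf) \<Rightarrow> 's \<Rightarrow> 'i list \<Rightarrow> 's list pmf" where
  "va_run upd s [] = return_pmf [s]"
| "va_run upd s (x # xs) = bind_pmf (upd s x) (\<lambda>s'. map_pmf (\<lambda>tr. s # tr) (va_run upd s' xs))"

text \<open>Space used along a trace, in words: memory states are lists of words.\<close>
definition space_used :: "nat list list \<Rightarrow> nat" where
  "space_used tr = Max (length ` set tr)"

end

theory Submission
  imports Defs
begin


type_synonym tri = "nat \<times> nat \<times> nat"
type_synonym ast = "(nat \<times> nat) \<times> tri list"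

fun step1 :: "nat \<Rightarrow> nat \<times> nat \<Rightarrow> tri \<Rightarrow> va_item \<Rightarrow> tri" where
  "step1 n p (a,b,c) (Vtx v col) = (a, if a = v then col else b, c)"
| "step1 n (cv,cc) (a,b,c) (Edg u v) = (a, b, if a = u \<and> b = cc \<and> c < n then Suc c else c)"

fun stepc :: "nat \<times> nat \<Rightarrow> va_item \<Rightarrow> nat \<times> nat" where
  "stepc p (Vtx v col) = (v,col)"
| "stepc p (Edg u v) = p"

definition stepA :: "nat \<Rightarrow> ast \<Rightarrow> va_item \<Rightarrow> ast" where
  "stepA n A x = (stepc (fst A) x, map (\<lambda>t. step1 n (fst A) t x) (snd A))"

fun tfold :: "nat \<Rightarrow> nat \<times> nat \<Rightarrow> tri \<Rightarrow> va_item list \<Rightarrow> tri" where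
  "tfold n p t [] = t"
| "tfold n p t (x # xs) = tfold n (stepc p x) (step1 n p t x) xs"

lemma foldl_stepA: "foldl (stepA n) (p, ts) xs = (foldl stepc p xs, map (\<lambda>t. tfold n p t xs) ts)"
  by (induction xs arbitrary: p ts) (simp_all add: stepA_def o_def)

lemma tfold_append: "tfold n p t (xs @ ys) = tfold n (foldl stepc p xs) (tfold n p t xs) ys"
  by (induction xs arbitrary: p t) auto

fun grp :: "nat list \<Rightarrow> tri list" where
  "grp (a # b # c # xs) = (a,b,c) # grp xs"
| "grp _ = []"

definition flat :: "ast \<Rightarrow> nat list" where
  "flat A = fst (fst A) # snd (fst A) # concat (map (\<lambda>(a,b,c). [a,b,c]) (snd A))"

fun unflat :: "nat list \<Rightarrow> ast" where
  "unflat (x # y # xs) = ((x,y), grp xs)"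
| "unflat _ = ((0,0),[])"

lemma grp_concat: "grp (concat (map (\<lambda>(a,b,c). [a,b,c]) ts)) = ts"
  by (induction ts) auto

lemma unflat_flat[simp]: "unflat (flat A) = A"
  by (cases A) (auto simp: flat_def grp_concat)

lemma length_flat: "length (flat A) = 2 + 3 * length (snd A)"
proof -
  have "\<And>ts::tri list. length (concat (map (\<lambda>(a,b,c). [a,b,c]) ts)) = 3 * length ts"
    by (induct_tac ts) auto
  thus ?thesis by (simp add: flat_def)
qed

fun trc :: "('s \<Rightarrow> 'i \<Rightarrow> 's) \<Rightarrow> 's \<Rightarrow> 'i list \<Rightarrow> 's list" where
  "trc F s [] = [s]"
| "trc F s (x # xs) = s # trc F (F s x) xs"

lemma va_run_det: "va_run (\<lambda>s x. return_pmf (F s x)) s xs = return_pmf (trc F s xs)"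
  by (induction xs arbitrary: s) (auto simp: bind_return_pmf map_return_pmf)

lemma trc_ne[simp]: "trc F s xs \<noteq> []"
  by (cases xs) auto

lemma last_trc: "last (trc F s xs) = foldl F s xs"
  by (induction xs arbitrary: s) auto

lemma trc_flat: "trc (\<lambda>s x. flat (stepA n (unflat s) x)) (flat A) xs = map flat (trc (stepA n) A xs)"
  by (induction xs arbitrary: A) auto

lemma length_trc_stepA: "st \<in> set (trc (stepA n) A xs) \<Longrightarrow> length (snd st) = length (snd A)"
proof (induction xs arbitrary: A)
  case Nil thus ?case by simp
next
  case (Cons x xs)
  have l: "length (snd (stepA n A x)) = length (snd A)" by (simp add: stepA_def)
  from Cons.prems have "st = A \<or> st \<in> set (trc (stepA n) (stepA n A x) xs)" by simp
  thus ?case using Cons.IH[of "stepA n A x"] l by metis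
qed



definition okA :: "nat \<Rightarrow> ast \<Rightarrow> bool" where
  "okA B A \<longleftrightarrow> fst (fst A) \<le> B \<and> snd (fst A) \<le> B \<and> (\<forall>(a,b,c)\<in>set (snd A). a \<le> B \<and> b \<le> B \<and> c \<le> B)"

fun okI :: "nat \<Rightarrow> va_item \<Rightarrow> bool" where
  "okI B (Vtx v col) = (v \<le> B \<and> col \<le> B)"
| "okI B (Edg u v) = True"

lemma step1_bound:
  assumes "a \<le> B" "b \<le> B" "c \<le> B" "okI B x" "n \<le> B"
  shows "fst (step1 n p (a,b,c) x) \<le> B \<and> fst (snd (step1 n p (a,b,c) x)) \<le> B \<and> snd (snd (step1 n p (a,b,c) x)) \<le> B"
  using assms by (cases x; cases p) auto

lemma okA_step:
  assumes "okA B A" "okI B x" "n \<le> B"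
  shows "okA B (stepA n A x)"
proof -
  have 1: "fst (stepc (fst A) x) \<le> B \<and> snd (stepc (fst A) x) \<le> B"
    using assms by (cases x) (auto simp: okA_def)
  have 2: "\<forall>t\<in>set (snd A). fst (step1 n (fst A) t x) \<le> B \<and> fst (snd (step1 n (fst A) t x)) \<le> B \<and> snd (snd (step1 n (fst A) t x)) \<le> B"
  proof
    fix t assume "t \<in> set (snd A)"
    then have "case t of (a,b,c) \<Rightarrow> a \<le> B \<and> b \<le> B \<and> c \<le> B"
      using assms(1) unfolding okA_def by blast
    then obtain a b c where "t = (a,b,c)" "a \<le> B" "b \<le> B" "c \<le> B"
      by (cases t) auto
    thus "fst (step1 n (fst A) t x) \<le> B \<and> fst (snd (step1 n (fst A) t x)) \<le> B \<and> snd (snd (step1 n (fst A) t x)) \<le> B"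
      using step1_bound assms by blast
  qed
  show ?thesis unfolding okA_def stepA_def using 1 2 by (auto simp: case_prod_unfold)
qed

lemma okA_trc: "okA B A \<Longrightarrow> \<forall>x\<in>set xs. okI B x \<Longrightarrow> n \<le> B \<Longrightarrow> st \<in> set (trc (stepA n) A xs) \<Longrightarrow> okA B st"
proof (induction xs arbitrary: A)
  case Nil thus ?case by simp
next
  case (Cons x xs)
  from Cons.prems have "st = A \<or> st \<in> set (trc (stepA n) (stepA n A x) xs)" by simp
  thus ?case using Cons.IH[of "stepA n A x"] okA_step[of B A x n] Cons.prems by auto
qed




lemma edges_fold:
  "distinct L \<Longrightarrow> tfold n (v,col) (a,b,c) (map (\<lambda>u. Edg u v) L)
     = (a, b, if a \<in> set L \<and> b = col \<and> c < n then Suc c else c)"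
  by (induction L arbitrary: c) auto

lemma blk_fold:
  "distinct L \<Longrightarrow> tfold n p (a,b,c) (Vtx v col # map (\<lambda>u. Edg u v) L)
     = (a, (if a = v then col else b),
          if a \<in> set L \<and> (if a = v then col else b) = col \<and> c < n then Suc c else c)"
  by (simp add: edges_fold)

definition blk :: "(nat \<Rightarrow> nat) \<Rightarrow> nat list \<Rightarrow> (nat \<Rightarrow> nat list) \<Rightarrow> nat \<Rightarrow> va_item list" where
  "blk f \<sigma> L i = Vtx (\<sigma> ! i) (f (\<sigma> ! i)) # map (\<lambda>u. Edg u (\<sigma> ! i)) (L i)"

definition dd :: "nat \<Rightarrow> (nat \<Rightarrow> nat) \<Rightarrow> nat list \<Rightarrow> (nat \<Rightarrow> nat list) \<Rightarrow> nat \<Rightarrow> nat" where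
  "dd n f \<sigma> L a = card {j. j < n \<and> a \<in> set (L j) \<and> f a = f (\<sigma> ! j)}"

context
  fixes n :: nat and E :: "nat set set" and f :: "nat \<Rightarrow> nat" and \<sigma> :: "nat list" and L :: "nat \<Rightarrow> nat list"
  assumes ds: "distinct \<sigma>" and st: "set \<sigma> = {0..<n}"
    and LL: "\<forall>i<n. distinct (L i) \<and> set (L i) = {u \<in> set (take i \<sigma>). {u, \<sigma> ! i} \<in> E}"
begin

lemma len_sigma: "length \<sigma> = n"
  using distinct_card[OF ds] st by simp

lemma nth_notin_take: "i < n \<Longrightarrow> \<sigma> ! i \<notin> set (take i \<sigma>)"
  using ds len_sigma by (auto simp: in_set_conv_nth nth_eq_iff_index_eq)

lemma inv_fold:
  "i \<le> n \<Longrightarrow> tfold n (0,0) (a,0,0) (concat (map (blk f \<sigma> L) [0..<i]))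
     = (a, if a \<in> set (take i \<sigma>) then f a else 0, card {j. j < i \<and> a \<in> set (L j) \<and> f a = f (\<sigma> ! j)})"
proof (induction i)
  case 0 thus ?case by simp
next
  case (Suc i)
  hence i: "i < n" by simp
  define b where "b = (if a \<in> set (take i \<sigma>) then f a else 0)"
  define c where "c = card {j. j < i \<and> a \<in> set (L j) \<and> f a = f (\<sigma> ! j)}"
  have cle: "c \<le> i"
  proof -
    have "c \<le> card {..<i}" unfolding c_def by (rule card_mono) auto
    thus ?thesis by simp
  qed
  have dL: "distinct (L i)" and sL: "set (L i) = {u \<in> set (take i \<sigma>). {u, \<sigma> ! i} \<in> E}"
    using LL i by auto
  have tk: "take (Suc i) \<sigma> = take i \<sigma> @ [\<sigma> ! i]"
    using i len_sigma by (simp add: take_Suc_conv_app_nth)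
  have "tfold n (0,0) (a,0,0) (concat (map (blk f \<sigma> L) [0..<Suc i]))
      = tfold n (foldl stepc (0,0) (concat (map (blk f \<sigma> L) [0..<i]))) (a, b, c) (blk f \<sigma> L i)"
    using Suc by (simp add: tfold_append b_def c_def)
  also have "\<dots> = (a, (if a = \<sigma> ! i then f (\<sigma> ! i) else b),
          if a \<in> set (L i) \<and> (if a = \<sigma> ! i then f (\<sigma> ! i) else b) = f (\<sigma> ! i) \<and> c < n then Suc c else c)"
    unfolding blk_def by (rule blk_fold[OF dL])
  also have "(if a = \<sigma> ! i then f (\<sigma> ! i) else b) = (if a \<in> set (take (Suc i) \<sigma>) then f a else 0)"
    unfolding b_def tk by auto
  also have "(if a \<in> set (L i) \<and> (if a \<in> set (take (Suc i) \<sigma>) then f a else 0) = f (\<sigma> ! i) \<and> c < n then Suc c else c)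
      = card {j. j < Suc i \<and> a \<in> set (L j) \<and> f a = f (\<sigma> ! j)}"
  proof -
    have eq: "{j. j < Suc i \<and> a \<in> set (L j) \<and> f a = f (\<sigma> ! j)}
       = (if a \<in> set (L i) \<and> f a = f (\<sigma> ! i) then insert i else id) {j. j < i \<and> a \<in> set (L j) \<and> f a = f (\<sigma> ! j)}"
      by (auto simp: less_Suc_eq)
    have "a \<in> set (L i) \<Longrightarrow> a \<in> set (take (Suc i) \<sigma>)" using sL tk by auto
    thus ?thesis unfolding eq c_def[symmetric] using cle i
      by (auto simp: c_def)
  qed
  finally show ?case .
qed

lemma in_take_nth: "x \<in> set (take j \<sigma>) \<Longrightarrow> j \<le> n \<Longrightarrow> \<exists>p<j. x = \<sigma> ! p"
  using len_sigma by (auto simp: in_set_conv_nth)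

lemma sum_dd:
  assumes sg: "simple_graph n E"
  shows "(\<Sum>a<n. dd n f \<sigma> L a) = card (mono_edges E f)"
proof -
  define S where "S = (SIGMA a:{..<n}. {j. j < n \<and> a \<in> set (L j) \<and> f a = f (\<sigma> ! j)})"
  have "(\<Sum>a<n. dd n f \<sigma> L a) = card S"
    unfolding S_def dd_def by (subst card_SigmaI) auto
  also have "bij_betw (\<lambda>(a,j). {a, \<sigma> ! j}) S (mono_edges E f)"
  proof (rule bij_betw_imageI)
    show "inj_on (\<lambda>(a,j). {a, \<sigma> ! j}) S"
    proof (rule inj_onI, clarify)
      fix a j a' j'
      assume A: "(a,j) \<in> S" "(a',j') \<in> S" "{a, \<sigma> ! j} = {a', \<sigma> ! j'}"
      from A(1) have j: "j < n" "a \<in> set (L j)" unfolding S_def by auto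
      from A(2) have j': "j' < n" "a' \<in> set (L j')" unfolding S_def by auto
      from j LL have "a \<in> set (take j \<sigma>)" by auto
      then obtain p where p: "p < j" "a = \<sigma> ! p" using in_take_nth j by fastforce
      from j' LL have "a' \<in> set (take j' \<sigma>)" by auto
      then obtain p' where p': "p' < j'" "a' = \<sigma> ! p'" using in_take_nth j' by fastforce
      have inj: "\<And>x y. x < n \<Longrightarrow> y < n \<Longrightarrow> \<sigma> ! x = \<sigma> ! y \<longleftrightarrow> x = y"
        using ds len_sigma nth_eq_iff_index_eq by blast
      from A(3) have "(a = a' \<and> \<sigma> ! j = \<sigma> ! j') \<or> (a = \<sigma> ! j' \<and> \<sigma> ! j = a')"
        by (auto simp: doubleton_eq_iff)
      thus "a = a' \<and> j = j'"
      proof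
        assume "a = a' \<and> \<sigma> ! j = \<sigma> ! j'" thus ?thesis using inj j j' by auto
      next
        assume "a = \<sigma> ! j' \<and> \<sigma> ! j = a'"
        hence "p = j'" "j = p'" using inj p p' j j' by auto
        thus ?thesis using p p' by auto
      qed
    qed
  next
    show "(\<lambda>(a,j). {a, \<sigma> ! j}) ` S = mono_edges E f"
    proof
      show "(\<lambda>(a,j). {a, \<sigma> ! j}) ` S \<subseteq> mono_edges E f"
        unfolding S_def mono_edges_def using LL by auto
    next
      show "mono_edges E f \<subseteq> (\<lambda>(a,j). {a, \<sigma> ! j}) ` S"
      proof
        fix e assume e: "e \<in> mono_edges E f"
        then obtain u v where uv: "e \<in> E" "e = {u,v}" "f u = f v" unfolding mono_edges_def by auto
        from sg uv(1) obtain x y where xy: "e = {x,y}" "x \<noteq> y" "x < n" "y < n"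
          unfolding simple_graph_def by blast
        have "u \<noteq> v" using uv(2) xy by auto
        have "u < n" "v < n" using uv(2) xy by (auto simp: doubleton_eq_iff)
        then obtain p q where pq: "p < n" "q < n" "u = \<sigma> ! p" "v = \<sigma> ! q"
          using st len_sigma by (metis atLeastLessThan_iff in_set_conv_nth zero_le)
        have pq': "p \<noteq> q" using pq \<open>u \<noteq> v\<close> by auto
        have mem: "\<And>p0 q0. p0 < q0 \<Longrightarrow> q0 < n \<Longrightarrow> \<sigma> ! p0 \<in> set (take q0 \<sigma>)"
        proof -
          fix p0 q0 assume "p0 < q0" "q0 < n"
          hence "take q0 \<sigma> ! p0 = \<sigma> ! p0" "p0 < length (take q0 \<sigma>)" using len_sigma by auto
          thus "\<sigma> ! p0 \<in> set (take q0 \<sigma>)" by (metis nth_mem)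
        qed
        show "e \<in> (\<lambda>(a,j). {a, \<sigma> ! j}) ` S"
        proof (cases "p < q")
          case True
          have "(u, q) \<in> S" unfolding S_def using LL pq True mem uv \<open>u < n\<close> by auto
          thus ?thesis using uv pq by force
        next
          case False
          hence "q < p" using pq' by auto
          have "{v, u} = e" using uv by auto
          have "(v, p) \<in> S" unfolding S_def using LL pq \<open>q < p\<close> mem uv \<open>v < n\<close> \<open>{v,u} = e\<close> by auto
          thus ?thesis using \<open>{v,u} = e\<close> pq by force
        qed
      qed
    qed
  qed
  hence "card S = card (mono_edges E f)" by (rule bij_betw_same_card)
  finally show ?thesis .
qed

lemma dd_le: "dd n f \<sigma> L a \<le> n"
proof -
  have "dd n f \<sigma> L a \<le> card {..<n}" unfolding dd_def by (rule card_mono) auto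
  thus ?thesis by simp
qed

end



lemma finite_set_Q:
  assumes n: "n > 0"
  shows "finite (set_pmf (Pi_pmf {..<k::nat} (0::nat) (\<lambda>_. pmf_of_set {..<n::nat})))"
proof -
  have e: "set_pmf (Pi_pmf {..<k::nat} (0::nat) (\<lambda>_. pmf_of_set {..<n::nat}))
         = PiE_dflt {..<k} 0 (set_pmf \<circ> (\<lambda>_. pmf_of_set {..<n}))"
    by (rule set_Pi_pmf) simp
  have "finite (PiE_dflt {..<k} 0 (set_pmf \<circ> (\<lambda>_. pmf_of_set {..<n})))"
    by (rule finite_PiE_dflt) (use n in \<open>auto simp: set_pmf_of_set lessThan_empty_iff\<close>)
  thus ?thesis by (simp only: e)
qed

lemma exp_U:
  assumes "n > 0"
  shows "measure_pmf.expectation (pmf_of_set {..<n::nat}) g = (\<Sum>u<n. g u) / real n"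
  using assms by (subst integral_pmf_of_set) auto

lemma intU: "n > 0 \<Longrightarrow> integrable (measure_pmf (pmf_of_set {..<n::nat})) (g::nat\<Rightarrow>real)"
  by (rule integrable_measure_pmf_finite) (auto simp: set_pmf_of_set lessThan_empty_iff)

lemma copy_variance:
  fixes n k m :: nat and d :: "nat \<Rightarrow> nat"
  assumes n: "n > 0" and sumd: "(\<Sum>u<n. d u) = m" and dle: "\<And>u. u < n \<Longrightarrow> d u \<le> n"
  defines "Q \<equiv> Pi_pmf {..<k} (0::nat) (\<lambda>_. pmf_of_set {..<n})"
  defines "Y \<equiv> (\<lambda>h. \<Sum>i<k. real (d (h i)))"
  shows "measure_pmf.expectation Q Y = real k * real m / real n"
    and "measure_pmf.variance Q Y \<le> real k * real m"
proof -
  let ?U = "pmf_of_set {..<n}"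
  have fin: "finite (set_pmf Q)" unfolding Q_def by (rule finite_set_Q[OF n])
  have intQ: "\<And>g::(nat\<Rightarrow>nat)\<Rightarrow>real. integrable (measure_pmf Q) g" by (rule integrable_measure_pmf_finite[OF fin])
  have mu: "measure_pmf.expectation ?U (\<lambda>u. real (d u)) = real m / real n"
    using n by (simp add: exp_U sumd[symmetric])
  have comp: "\<And>i. i < k \<Longrightarrow> map_pmf (\<lambda>h. h i) Q = ?U"
    unfolding Q_def by (subst Pi_pmf_component) auto
  have EY: "measure_pmf.expectation Q Y = real k * real m / real n"
  proof -
    have "measure_pmf.expectation Q Y = (\<Sum>i<k. measure_pmf.expectation ?U (\<lambda>u. real (d u)))"
      unfolding Q_def Y_def
      by (rule expectation_sum_Pi_pmf) (simp_all add: intU[OF n])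
    thus ?thesis using mu by simp
  qed
  thus "measure_pmf.expectation Q Y = real k * real m / real n" .
  have E2: "measure_pmf.expectation ?U (\<lambda>u. real (d u) * real (d u)) \<le> real m"
  proof -
    have "measure_pmf.expectation ?U (\<lambda>u. real (d u) * real (d u)) = (\<Sum>u<n. real (d u) * real (d u)) / real n"
      using n by (simp add: exp_U)
    also have "\<dots> \<le> (\<Sum>u<n. real n * real (d u)) / real n"
      proof (intro divide_right_mono sum_mono mult_right_mono)
      fix u assume "u \<in> {..<n}" thus "real (d u) \<le> real n" using dle by simp
    qed simp_all
    also have "\<dots> = real m" using n by (simp add: sum_distrib_left[symmetric] sumd[symmetric])
    finally show ?thesis .
  qed
  have cross: "\<And>i j. i < k \<Longrightarrow> j < k \<Longrightarrow>
      measure_pmf.expectation Q (\<lambda>h. real (d (h i)) * real (d (h j)))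
        = (if i = j then measure_pmf.expectation ?U (\<lambda>u. real (d u) * real (d u))
           else (real m / real n)^2)"
  proof -
    fix i j assume ij: "i < k" "j < k"
    show "?thesis i j"
    proof (cases "i = j")
      case True
      have "measure_pmf.expectation Q (\<lambda>h. real (d (h i)) * real (d (h i)))
          = measure_pmf.expectation (map_pmf (\<lambda>h. h i) Q) (\<lambda>u. real (d u) * real (d u))"
        by simp
      thus ?thesis using True comp ij by simp
    next
      case False
      define F where "F = (\<lambda>x v. if x = i \<or> x = j then real (d v) else (1::real))"
      have pr: "\<And>h. (\<Prod>x\<in>{..<k}. F x (h x)) = real (d (h i)) * real (d (h j))"
      proof -
        fix h :: "nat \<Rightarrow> nat"
        have "(\<Prod>x\<in>{..<k}. F x (h x)) = F i (h i) * (\<Prod>x\<in>{..<k}-{i}. F x (h x))"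
          using ij by (subst prod.remove) auto
        also have "(\<Prod>x\<in>{..<k}-{i}. F x (h x)) = F j (h j) * (\<Prod>x\<in>{..<k}-{i}-{j}. F x (h x))"
          using ij False by (subst prod.remove) auto
        also have "(\<Prod>x\<in>{..<k}-{i}-{j}. F x (h x)) = 1"
          by (rule prod.neutral) (auto simp: F_def)
        finally show "?thesis h" by (simp add: F_def)
      qed
      have "measure_pmf.expectation Q (\<lambda>h. \<Prod>x\<in>{..<k}. F x (h x))
            = (\<Prod>x\<in>{..<k}. measure_pmf.expectation ?U (\<lambda>v. F x v))"
        unfolding Q_def by (rule expectation_prod_Pi_pmf) (simp_all add: F_def intU[OF n])
      also have "\<dots> = measure_pmf.expectation ?U (\<lambda>v. F i v) * measure_pmf.expectation ?U (\<lambda>v. F j v)"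
      proof -
        have "(\<Prod>x\<in>{..<k}. measure_pmf.expectation ?U (\<lambda>v. F x v))
              = measure_pmf.expectation ?U (\<lambda>v. F i v) * (\<Prod>x\<in>{..<k}-{i}. measure_pmf.expectation ?U (\<lambda>v. F x v))"
          using ij by (subst prod.remove) auto
        also have "(\<Prod>x\<in>{..<k}-{i}. measure_pmf.expectation ?U (\<lambda>v. F x v))
             = measure_pmf.expectation ?U (\<lambda>v. F j v) * (\<Prod>x\<in>{..<k}-{i}-{j}. measure_pmf.expectation ?U (\<lambda>v. F x v))"
          using ij False by (subst prod.remove) auto
        also have "(\<Prod>x\<in>{..<k}-{i}-{j}. measure_pmf.expectation ?U (\<lambda>v. F x v)) = 1"
          by (rule prod.neutral) (auto simp: F_def)
        finally show ?thesis by simp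
      qed
      also have "\<dots> = (real m / real n)^2" using mu by (simp add: F_def power2_eq_square)
      finally show ?thesis using pr False by simp
    qed
  qed
  have EY2: "measure_pmf.expectation Q (\<lambda>h. (Y h)^2) \<le> real k * real m + (real k * real m / real n)^2"
  proof -
    have "(\<lambda>h. (Y h)^2) = (\<lambda>h. \<Sum>i<k. \<Sum>j<k. real (d (h i)) * real (d (h j)))"
      unfolding Y_def power2_eq_square by (simp add: sum_product)
    hence "measure_pmf.expectation Q (\<lambda>h. (Y h)^2)
        = (\<Sum>i<k. \<Sum>j<k. measure_pmf.expectation Q (\<lambda>h. real (d (h i)) * real (d (h j))))"
      by (simp add: Bochner_Integration.integral_sum intQ)
    also have "\<dots> = (\<Sum>i<k. \<Sum>j<k. (if i = j then measure_pmf.expectation ?U (\<lambda>u. real (d u) * real (d u))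
           else (real m / real n)^2))"
      using cross by simp
    also have "\<dots> \<le> (\<Sum>i<k. \<Sum>j<k. (if i = j then real m else 0) + (real m / real n)^2)"
      by (intro sum_mono) (smt (verit) E2 zero_le_power2)
    also have "\<dots> = (\<Sum>i<k. \<Sum>j<k. (if i = j then real m else 0)) + (\<Sum>i<k. \<Sum>j<k. (real m / real n)^2)"
      by (simp only: sum.distrib)
    also have "\<dots> = real k * real m + real k * (real k * (real m / real n)^2)"
      by simp
    also have "\<dots> = real k * real m + (real k * real m / real n)^2"
      using n by (simp add: power2_eq_square field_simps)
    finally show ?thesis .
  qed
  have "measure_pmf.variance Q Y = measure_pmf.expectation Q (\<lambda>h. (Y h)^2) - (measure_pmf.expectation Q Y)^2"
    by (rule measure_pmf.variance_eq) (auto intro: intQ)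
  thus "measure_pmf.variance Q Y \<le> real k * real m" using EY2 EY by simp
qed




lemma copy_bad:
  fixes n k m T :: nat and d :: "nat \<Rightarrow> nat" and \<epsilon> :: real
  assumes n: "n > 0" and sumd: "(\<Sum>u<n. d u) = m" and dle: "\<And>u. u < n \<Longrightarrow> d u \<le> n"
    and k: "k > 0" and mT: "m \<ge> T" and T: "T \<ge> 1" and e: "\<epsilon> > 0"
    and kb: "real k \<ge> 4 * (real n)^2 / (\<epsilon>^2 * real T)"
  defines "Q \<equiv> Pi_pmf {..<k} (0::nat) (\<lambda>_. pmf_of_set {..<n})"
  shows "measure_pmf.prob Q {h. \<not> \<bar>real n / real k * (\<Sum>i<k. real (d (h i))) - real m\<bar> \<le> \<epsilon> * real m} \<le> 1/4"
proof -
  define Y where "Y = (\<lambda>h. \<Sum>i<k. real (d (h i)))"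
  have EY: "measure_pmf.expectation Q Y = real k * real m / real n"
    and VY: "measure_pmf.variance Q Y \<le> real k * real m"
    using copy_variance[OF n sumd dle, of k] unfolding Q_def Y_def by auto
  have m: "real m \<ge> 1" using mT T by simp
  define a where "a = \<epsilon> * real m * real k / real n"
  have a: "a > 0" unfolding a_def using e m k n by simp
  have fin: "finite (set_pmf Q)" unfolding Q_def by (rule finite_set_Q[OF n])
  have sub: "{h. \<not> \<bar>real n / real k * Y h - real m\<bar> \<le> \<epsilon> * real m}
      \<subseteq> {h \<in> space (measure_pmf Q). \<bar>Y h - measure_pmf.expectation Q Y\<bar> \<ge> a}"
  proof
    fix h assume "h \<in> {h. \<not> \<bar>real n / real k * Y h - real m\<bar> \<le> \<epsilon> * real m}"
    hence h: "\<bar>real n / real k * Y h - real m\<bar> > \<epsilon> * real m" by simp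
    have "real n / real k * Y h - real m = real n / real k * (Y h - real k * real m / real n)"
      using n k by (simp add: field_simps)
    hence "\<bar>real n / real k * Y h - real m\<bar> = real n / real k * \<bar>Y h - real k * real m / real n\<bar>"
      using n k by (simp add: abs_mult)
    with h have "real n / real k * \<bar>Y h - real k * real m / real n\<bar> > \<epsilon> * real m" by simp
    hence "\<bar>Y h - real k * real m / real n\<bar> > \<epsilon> * real m * real k / real n"
      using n k by (simp add: field_simps)
    thus "h \<in> {h \<in> space (measure_pmf Q). \<bar>Y h - measure_pmf.expectation Q Y\<bar> \<ge> a}"
      unfolding a_def EY by simp
  qed
  have "measure_pmf.prob Q {h. \<not> \<bar>real n / real k * Y h - real m\<bar> \<le> \<epsilon> * real m}
      \<le> measure_pmf.prob Q {h \<in> space (measure_pmf Q). \<bar>Y h - measure_pmf.expectation Q Y\<bar> \<ge> a}"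
    by (rule measure_pmf.finite_measure_mono[OF sub]) simp
  also have "\<dots> \<le> measure_pmf.variance Q Y / a^2"
    by (rule measure_pmf.Chebyshev_inequality) (simp_all add: a integrable_measure_pmf_finite[OF fin])
  also have "\<dots> \<le> real k * real m / a^2"
    using VY a by (simp add: divide_right_mono)
  also have "real k * real m / a^2 = (real n)^2 / (\<epsilon>^2 * real m * real k)"
    unfolding a_def using n k m e by (simp add: field_simps power2_eq_square)
  also have "\<dots> \<le> (real n)^2 / (\<epsilon>^2 * real T * real k)"
    using n k m e mT T by (intro divide_left_mono mult_right_mono mult_left_mono) auto
  also have "\<dots> \<le> 1/4"
  proof -
    have pos: "\<epsilon>^2 * real T > 0" using e T by simp
    have "4 * (real n)^2 \<le> real k * (\<epsilon>^2 * real T)"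
      using kb pos by (simp add: divide_le_eq)
    moreover have pos2: "0 < \<epsilon>^2 * real T * real k" using pos k by simp
    ultimately show ?thesis by (simp add: pos_divide_le_eq[OF pos2] algebra_simps)
  qed
  finally show ?thesis unfolding Y_def .
qed

lemma map_pmf_bernoulli:
  "map_pmf P Q = bernoulli_pmf (measure_pmf.prob Q {x. P x})"
proof (rule pmf_eqI)
  fix b :: bool
  let ?q = "measure_pmf.prob Q {x. P x}"
  have q: "0 \<le> ?q" "?q \<le> 1" by auto
  show "pmf (map_pmf P Q) b = pmf (bernoulli_pmf ?q) b"
  proof (cases b)
    case True
    have "P -` {True} = {x. P x}" by auto
    thus ?thesis using True q by (simp add: pmf_map)
  next
    case False
    have "P -` {False} = - {x. P x}" by auto
    moreover have "measure_pmf.prob Q (UNIV - {x. P x}) = 1 - ?q"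
      using measure_pmf.prob_compl[of "{x. P x}" Q] by simp
    ultimately have "pmf (map_pmf P Q) False = 1 - ?q"
      by (simp add: pmf_map Compl_eq_Diff_UNIV)
    thus ?thesis using False q by simp
  qed
qed

lemma median_amp:
  fixes R :: nat and Q :: "'a pmf" and bad :: "'a \<Rightarrow> bool"
  assumes q: "measure_pmf.prob Q {x. bad x} \<le> 1/4" and R: "R > 0"
  shows "measure_pmf.prob (Pi_pmf {..<R} dfl (\<lambda>_. Q)) {g. R \<le> 2 * card {r\<in>{..<R}. bad (g r)}}
           \<le> exp (- real R / 8)"
proof -
  define q where "q = measure_pmf.prob Q {x. bad x}"
  have q01: "q \<in> {0..1}" unfolding q_def by auto
  have "map_pmf (\<lambda>g. card {r\<in>{..<R}. bad (g r)}) (Pi_pmf {..<R} dfl (\<lambda>_. Q))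
      = map_pmf (\<lambda>f. card {r\<in>{..<R}. f r}) (map_pmf (\<lambda>g. bad \<circ> g) (Pi_pmf {..<R} dfl (\<lambda>_. Q)))"
    by (simp add: pmf.map_comp o_def)
  also have "map_pmf (\<lambda>g. bad \<circ> g) (Pi_pmf {..<R} dfl (\<lambda>_. Q))
        = Pi_pmf {..<R} (bad dfl) (\<lambda>_. map_pmf bad Q)"
    by (rule Pi_pmf_map[symmetric]) auto
  also have "map_pmf bad Q = bernoulli_pmf q" unfolding q_def by (rule map_pmf_bernoulli)
  also have "map_pmf (\<lambda>f. card {r\<in>{..<R}. f r}) (Pi_pmf {..<R} (bad dfl) (\<lambda>_. bernoulli_pmf q))
       = binomial_pmf R q"
    by (rule binomial_pmf_altdef'[symmetric]) (use q01 in auto)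
  finally have eq: "map_pmf (\<lambda>g. card {r\<in>{..<R}. bad (g r)}) (Pi_pmf {..<R} dfl (\<lambda>_. Q)) = binomial_pmf R q" .
  have "measure_pmf.prob (Pi_pmf {..<R} dfl (\<lambda>_. Q)) {g. R \<le> 2 * card {r\<in>{..<R}. bad (g r)}}
      = measure_pmf.prob (binomial_pmf R q) {x. R \<le> 2 * x}"
    by (subst eq[symmetric]) simp
  also have "{x. R \<le> 2 * x} = {x. real x \<ge> real R * q + (real R / 2 - real R * q)}"
    by auto
  also have "measure_pmf.prob (binomial_pmf R q) \<dots> \<le> exp (-2 * (real R / 2 - real R * q)^2 / real R)"
    by (rule binomial_distribution.prob_ge) (use q01 R q in \<open>auto simp: binomial_distribution_def q_def\<close>)
  also have "\<dots> \<le> exp (- real R / 8)"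
  proof -
    have "real R / 4 \<le> real R / 2 - real R * q" using q R unfolding q_def by (simp add: field_simps)
    hence "(real R / 4)^2 \<le> (real R / 2 - real R * q)^2" by (intro power_mono) auto
    hence "- real R / 8 \<ge> -2 * (real R / 2 - real R * q)^2 / real R"
      using R by (simp add: field_simps power2_eq_square)
    thus ?thesis by simp
  qed
  finally show ?thesis .
qed




definition median :: "real list \<Rightarrow> real" where
  "median xs = sort xs ! (length xs div 2)"

lemma median_good:
  fixes xs :: "real list"
  assumes R: "length xs > 0" and few: "2 * length (filter (\<lambda>x. \<not> (lo \<le> x \<and> x \<le> hi)) xs) < length xs"
  shows "lo \<le> median xs \<and> median xs \<le> hi"
proof -
  define ys where "ys = sort xs"
  define R where "R = length xs"
  define h where "h = R div 2"
  have ly: "length ys = R" unfolding ys_def R_def by simp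
  have so: "sorted ys" unfolding ys_def by simp
  have hR: "h < R" unfolding h_def using R R_def by simp
  define bad where "bad = (\<lambda>x::real. \<not> (lo \<le> x \<and> x \<le> hi))"
  have cnt: "length (filter bad ys) = length (filter bad xs)"
    unfolding ys_def by (simp add: filter_sort)
  have cc: "length (filter bad ys) = card {i. i < R \<and> bad (ys ! i)}"
    using ly by (simp add: length_filter_conv_card)
  have few': "2 * card {i. i < R \<and> bad (ys ! i)} < R"
    using few cnt cc unfolding bad_def R_def by simp
  have fin: "finite {i. i < R \<and> bad (ys ! i)}" by simp
  show ?thesis
  proof (rule ccontr)
    assume "\<not> ?thesis"
    hence "ys ! h < lo \<or> ys ! h > hi" unfolding median_def ys_def h_def R_def by auto
    thus False
    proof
      assume a: "ys ! h < lo"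
      have "{..h} \<subseteq> {i. i < R \<and> bad (ys ! i)}"
      proof
        fix i assume "i \<in> {..h}"
        hence "i \<le> h" by simp
        hence "ys ! i \<le> ys ! h" using sorted_nth_mono[OF so] hR ly by simp
        thus "i \<in> {i. i < R \<and> bad (ys ! i)}" using a \<open>i \<le> h\<close> hR unfolding bad_def by auto
      qed
      hence "card {..h} \<le> card {i. i < R \<and> bad (ys ! i)}" by (rule card_mono[OF fin])
      thus False using few' unfolding h_def by simp
    next
      assume a: "ys ! h > hi"
      have "{h..<R} \<subseteq> {i. i < R \<and> bad (ys ! i)}"
      proof
        fix i assume "i \<in> {h..<R}"
        hence "h \<le> i" "i < R" by auto
        hence "ys ! h \<le> ys ! i" using sorted_nth_mono[OF so] ly by simp
        thus "i \<in> {i. i < R \<and> bad (ys ! i)}" using a \<open>i < R\<close> unfolding bad_def by auto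
      qed
      hence "card {h..<R} \<le> card {i. i < R \<and> bad (ys ! i)}" by (rule card_mono[OF fin])
      thus False using few' unfolding h_def by simp
    qed
  qed
qed




context
  fixes n :: nat and E :: "nat set set" and f :: "nat \<Rightarrow> nat" and \<sigma> :: "nat list" and L :: "nat \<Rightarrow> nat list"
  assumes ds: "distinct \<sigma>" and st: "set \<sigma> = {0..<n}"
    and LL: "\<forall>i<n. distinct (L i) \<and> set (L i) = {u \<in> set (take i \<sigma>). {u, \<sigma> ! i} \<in> E}"
begin

lemma final_counts:
  assumes s: "s = concat (map (\<lambda>i. Vtx (\<sigma> ! i) (f (\<sigma> ! i)) # map (\<lambda>u. Edg u (\<sigma> ! i)) (L i)) [0..<n])"
  shows "map (\<lambda>t. snd (snd t)) (snd (foldl (stepA n) ((0,0), map (\<lambda>a. (a,0,0)) ids) s)) = map (dd n f \<sigma> L) ids"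
proof -
  have s': "s = concat (map (blk f \<sigma> L) [0..<n])" unfolding s blk_def by simp
  have "\<And>a. tfold n (0,0) (a,0,0) s = (a, if a \<in> set (take n \<sigma>) then f a else 0, dd n f \<sigma> L a)"
    unfolding s' dd_def by (rule inv_fold[OF ds st LL]) simp
  thus ?thesis by (simp add: foldl_stepA)
qed

lemma items_ok:
  assumes s: "s = concat (map (\<lambda>i. Vtx (\<sigma> ! i) (f (\<sigma> ! i)) # map (\<lambda>u. Edg u (\<sigma> ! i)) (L i)) [0..<n])"
    and col: "coloring n C f"
  shows "\<forall>x\<in>set s. okI (n + C) x"
proof
  fix x assume "x \<in> set s"
  then obtain i where i: "i < n" "x \<in> set (Vtx (\<sigma> ! i) (f (\<sigma> ! i)) # map (\<lambda>u. Edg u (\<sigma> ! i)) (L i))"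
    unfolding s by auto
  have "\<sigma> ! i \<in> set \<sigma>" using i(1) len_sigma[OF ds st LL] by simp
  hence "\<sigma> ! i < n" using st by simp
  moreover have "f (\<sigma> ! i) \<le> C" using col \<open>\<sigma> ! i < n\<close> unfolding coloring_def by auto
  ultimately show "okI (n + C) x" using i(2) by auto
qed

end

definition kk :: "nat \<Rightarrow> real \<Rightarrow> nat \<Rightarrow> nat" where
  "kk n \<epsilon> T = nat \<lceil>4 * (real n)^2 / (\<epsilon>^2 * real T)\<rceil>"

definition RR :: "nat \<Rightarrow> nat" where
  "RR n = nat \<lceil>8 * ln (real n + 2)\<rceil>"

definition ids0 :: "nat \<Rightarrow> nat \<Rightarrow> (nat \<Rightarrow> nat \<Rightarrow> nat) \<Rightarrow> nat list" where
  "ids0 R k g = map (\<lambda>j. g (j div k) (j mod k)) [0..<R*k]"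

definition A0 :: "nat list \<Rightarrow> ast" where
  "A0 ids = ((0,0), map (\<lambda>a. (a,0,0)) ids)"

definition GG :: "nat \<Rightarrow> real \<Rightarrow> nat \<Rightarrow> (nat \<Rightarrow> nat \<Rightarrow> nat) pmf" where
  "GG n \<epsilon> T = Pi_pmf {..<RR n} (\<lambda>_. 0) (\<lambda>_. Pi_pmf {..<kk n \<epsilon> T} (0::nat) (\<lambda>_. pmf_of_set {..<n}))"

definition initA :: "nat \<Rightarrow> real \<Rightarrow> nat \<Rightarrow> ast pmf" where
  "initA n \<epsilon> T = (if n \<le> kk n \<epsilon> T then return_pmf (A0 [0..<n])
      else map_pmf (\<lambda>g. A0 (ids0 (RR n) (kk n \<epsilon> T) g)) (GG n \<epsilon> T))"

definition initS :: "nat \<Rightarrow> real \<Rightarrow> nat \<Rightarrow> nat list pmf" where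
  "initS n \<epsilon> T = map_pmf flat (initA n \<epsilon> T)"

definition updS :: "nat \<Rightarrow> real \<Rightarrow> nat \<Rightarrow> nat list \<Rightarrow> va_item \<Rightarrow> nat list pmf" where
  "updS n \<epsilon> T s x = return_pmf (flat (stepA n (unflat s) x))"

definition cnts :: "nat list \<Rightarrow> nat list" where
  "cnts s = map (\<lambda>t. snd (snd t)) (snd (unflat s))"

definition outS :: "nat \<Rightarrow> real \<Rightarrow> nat \<Rightarrow> nat list \<Rightarrow> real" where
  "outS n \<epsilon> T s = (if n \<le> kk n \<epsilon> T then real (sum_list (cnts s))
     else median (map (\<lambda>r. real n / real (kk n \<epsilon> T) * (\<Sum>i<kk n \<epsilon> T. real (cnts s ! (r * kk n \<epsilon> T + i)))) [0..<RR n]))"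

lemma P_eq:
  "bind_pmf (initS n \<epsilon> T) (\<lambda>s0. va_run (updS n \<epsilon> T) s0 s)
     = map_pmf (\<lambda>A. map flat (trc (stepA n) A s)) (initA n \<epsilon> T)"
proof -
  have u: "updS n \<epsilon> T = (\<lambda>s x. return_pmf (flat (stepA n (unflat s) x)))"
    by (intro ext) (simp add: updS_def)
  have "bind_pmf (initS n \<epsilon> T) (\<lambda>s0. va_run (updS n \<epsilon> T) s0 s)
      = bind_pmf (map_pmf flat (initA n \<epsilon> T)) (\<lambda>s0. return_pmf (trc (\<lambda>s x. flat (stepA n (unflat s) x)) s0 s))"
    unfolding initS_def u va_run_det ..
  also have "\<dots> = bind_pmf (initA n \<epsilon> T) (\<lambda>A. return_pmf (trc (\<lambda>s x. flat (stepA n (unflat s) x)) (flat A) s))"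
    by (rule bind_map_pmf)
  also have "\<dots> = bind_pmf (initA n \<epsilon> T) (\<lambda>A. return_pmf (map flat (trc (stepA n) A s)))"
    by (simp only: trc_flat)
  also have "\<dots> = map_pmf (\<lambda>A. map flat (trc (stepA n) A s)) (initA n \<epsilon> T)"
    by (simp only: map_pmf_def)
  finally show ?thesis .
qed




lemma set_GG:
  assumes "g \<in> set_pmf (GG n \<epsilon> T)" "n > 0" "r < RR n" "i < kk n \<epsilon> T"
  shows "g r i < n"
proof -
  have Q: "g r \<in> set_pmf (Pi_pmf {..<kk n \<epsilon> T} (0::nat) (\<lambda>_. pmf_of_set {..<n}))"
    using assms(1,3) unfolding GG_def by (simp add: set_Pi_pmf PiE_dflt_def)
  have "{..<n} \<noteq> {}" using assms(2) by auto
  thus ?thesis using Q assms(4) by (simp add: set_Pi_pmf PiE_dflt_def set_pmf_of_set)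
qed

lemma initA_support:
  assumes "A \<in> set_pmf (initA n \<epsilon> T)" "n > 0"
  shows "\<exists>ids. A = A0 ids \<and> (\<forall>a\<in>set ids. a < n)
      \<and> length ids = (if n \<le> kk n \<epsilon> T then n else RR n * kk n \<epsilon> T)"
proof (cases "n \<le> kk n \<epsilon> T")
  case True
  thus ?thesis using assms by (auto simp: initA_def)
next
  case False
  then obtain g where g: "g \<in> set_pmf (GG n \<epsilon> T)" "A = A0 (ids0 (RR n) (kk n \<epsilon> T) g)"
    using assms by (auto simp: initA_def)
  have "\<forall>a\<in>set (ids0 (RR n) (kk n \<epsilon> T) g). a < n"
  proof
    fix a assume "a \<in> set (ids0 (RR n) (kk n \<epsilon> T) g)"
    then obtain j where j: "j < RR n * kk n \<epsilon> T" "a = g (j div kk n \<epsilon> T) (j mod kk n \<epsilon> T)"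
      unfolding ids0_def by auto
    have k: "kk n \<epsilon> T > 0" using j(1) by (cases "kk n \<epsilon> T") auto
    have "j div kk n \<epsilon> T < RR n" using j(1) k by (simp add: div_less_iff_less_mult)
    moreover have "j mod kk n \<epsilon> T < kk n \<epsilon> T" using k by simp
    ultimately show "a < n" using set_GG[OF g(1) assms(2)] j(2) by simp
  qed
  thus ?thesis using g False by (intro exI[of _ "ids0 (RR n) (kk n \<epsilon> T) g"]) (simp add: ids0_def)
qed

lemma okA_flat: "okA B A \<Longrightarrow> w \<in> set (flat A) \<Longrightarrow> w \<le> B"
  unfolding okA_def flat_def by auto

lemma okA_A0: "\<forall>a\<in>set ids. a < n \<Longrightarrow> n \<le> B \<Longrightarrow> okA B (A0 ids)"
  unfolding okA_def A0_def by auto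

lemma space_trc: "space_used (map flat (trc (stepA n) A s)) = 2 + 3 * length (snd A)"
proof -
  have "length ` set (map flat (trc (stepA n) A s)) = {2 + 3 * length (snd A)}"
  proof
    show "length ` set (map flat (trc (stepA n) A s)) \<subseteq> {2 + 3 * length (snd A)}"
    proof
      fix x assume "x \<in> length ` set (map flat (trc (stepA n) A s))"
      then obtain st where "st \<in> set (trc (stepA n) A s)" "x = length (flat st)" by auto
      thus "x \<in> {2 + 3 * length (snd A)}" using length_trc_stepA[of st n A s] length_flat[of st] by simp
    qed
    have "A \<in> set (trc (stepA n) A s)" by (cases s) auto
    thus "{2 + 3 * length (snd A)} \<subseteq> length ` set (map flat (trc (stepA n) A s))"
      using length_flat[of A] by (metis image_eqI list.set_map singletonD subsetI)
  qed
  thus ?thesis unfolding space_used_def by simp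
qed

lemma last_P: "last (map flat (trc (stepA n) A s)) = flat (foldl (stepA n) A s)"
  by (simp add: last_map last_trc)

lemma cnts_flat: "cnts (flat X) = map (\<lambda>t. snd (snd t)) (snd X)"
  unfolding cnts_def by simp




lemma space_bound:
  fixes n T :: nat and \<epsilon> :: real
  assumes n2: "n \<ge> 2" and e: "0 < \<epsilon>" and e1: "\<epsilon> < 1" and T: "T \<ge> 1" and Tn: "real T \<le> (real n)^2"
  shows "real (2 + 3 * (if n \<le> kk n \<epsilon> T then n else RR n * kk n \<epsilon> T))
     \<le> 200 * ln (real n + 2) powr 1 * (1/\<epsilon>) powr 2 * min (real n) ((real n)^2 / real T)"
proof -
  define L where "L = ln (real n + 2)"
  define I where "I = (1/\<epsilon>)^2"
  define \<mu> where "\<mu> = min (real n) ((real n)^2 / real T)"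
  define x where "x = 4 * (real n)^2 / (\<epsilon>^2 * real T)"
  have L1: "L \<ge> 1"
  proof -
    have "exp 1 \<le> (3::real)" by (rule exp_le)
    also have "3 \<le> real n + 2" using n2 by simp
    finally have "exp 1 \<le> real n + 2" .
    thus ?thesis unfolding L_def by (subst ln_ge_iff) auto
  qed
  have I1: "I \<ge> 1" unfolding I_def using e e1 by (simp add: power_le_one_iff field_simps)
  have nT: "(real n)^2 / real T \<ge> 1" using Tn T by simp
  have mu1: "\<mu> \<ge> 1" unfolding \<mu>_def using nT n2 by simp
  have xI: "x = 4 * I * ((real n)^2 / real T)" unfolding x_def I_def by (simp add: field_simps)
  have x0: "x \<ge> 0" unfolding x_def by simp
  have kkx: "real (kk n \<epsilon> T) \<le> x + 1" "x \<le> real (kk n \<epsilon> T)"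
    unfolding kk_def x_def[symmetric] using x0 by linarith+
  have rhs: "200 * ln (real n + 2) powr 1 * (1/\<epsilon>) powr 2 * min (real n) ((real n)^2 / real T) = 200 * L * I * \<mu>"
  proof -
    have "ln (real n + 2) powr 1 = L" unfolding L_def using L1 L_def by simp
    moreover have "(1/\<epsilon>) powr 2 = I" unfolding I_def using e by (simp add: powr_numeral)
    ultimately show ?thesis unfolding \<mu>_def using L1 by simp
  qed
  show ?thesis
  proof (cases "n \<le> kk n \<epsilon> T")
    case True
    have "real n \<le> x + 1" using True kkx by linarith
    hence a: "real n \<le> 8 * I * ((real n)^2 / real T)" using n2 xI by simp
    have b: "real n \<le> 8 * I * real n" using I1 n2 by simp
    have "real n \<le> 8 * I * \<mu>" unfolding \<mu>_def using a b by (cases "real n \<le> (real n)^2 / real T") (auto simp: min_def)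
    hence "real (2 + 3 * n) \<le> 40 * I * \<mu>" using n2 by simp
    also have "\<dots> \<le> 200 * L * I * \<mu>" using L1 I1 mu1 by (simp add: mult_right_mono)
    finally show ?thesis using True rhs by simp
  next
    case False
    have R: "real (RR n) \<le> 9 * L"
    proof -
      have "real (RR n) \<le> 8 * L + 1" unfolding RR_def L_def[symmetric] using L1 by linarith
      thus ?thesis using L1 by simp
    qed
    have Iy: "1 * 1 \<le> I * ((real n)^2 / real T)" by (rule mult_mono) (use I1 nT in auto)
    have x4: "x = 4 * (I * ((real n)^2 / real T))" using xI by simp
    have "real (kk n \<epsilon> T) \<le> 5 * (I * ((real n)^2 / real T))" using kkx(1) x4 Iy by linarith
    hence a: "real (kk n \<epsilon> T) \<le> 5 * I * ((real n)^2 / real T)" by simp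
    have In: "1 * real n \<le> I * real n" by (rule mult_right_mono) (use I1 in auto)
    have "real (kk n \<epsilon> T) \<le> real n" using False by simp
    hence "real (kk n \<epsilon> T) \<le> 5 * (I * real n)" using In n2 by linarith
    hence b: "real (kk n \<epsilon> T) \<le> 5 * I * real n" by simp
    have k: "real (kk n \<epsilon> T) \<le> 5 * I * \<mu>" unfolding \<mu>_def using a b
      by (cases "real n \<le> (real n)^2 / real T") (auto simp: min_def)
    have "real (RR n * kk n \<epsilon> T) \<le> (9 * L) * (5 * I * \<mu>)"
      unfolding of_nat_mult using R k by (intro mult_mono) auto
    hence "real (2 + 3 * (RR n * kk n \<epsilon> T)) \<le> 2 + 135 * L * I * \<mu>" by (simp add: algebra_simps)
    also have "\<dots> \<le> 200 * L * I * \<mu>"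
    proof -
      have LI: "1 * 1 \<le> L * I" by (rule mult_mono) (use L1 I1 in auto)
      have "1 * 1 \<le> (L * I) * \<mu>" by (rule mult_mono) (use LI mu1 in auto)
      hence "1 \<le> L * I * \<mu>" by simp
      thus ?thesis by linarith
    qed
    finally show ?thesis using False rhs by simp
  qed
qed




lemma prob1:
  assumes "\<forall>x\<in>set_pmf M. x \<in> A"
  shows "measure_pmf.prob M A = 1"
  using assms by (subst measure_pmf.prob_eq_1) (auto intro!: AE_pmfI)

lemma exp_bound:
  assumes n: "n > 0"
  shows "exp (- real (RR n) / 8) \<le> 1 / real n"
proof -
  have "8 * ln (real n + 2) \<le> real (RR n)" unfolding RR_def by linarith
  hence "- real (RR n) / 8 \<le> - ln (real n + 2)" by simp
  hence "exp (- real (RR n) / 8) \<le> exp (- ln (real n + 2))" by simp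
  also have "\<dots> = 1 / (real n + 2)" by (simp add: exp_minus inverse_eq_divide)
  also have "\<dots> \<le> 1 / real n" using n by (simp add: frac_le)
  finally show ?thesis .
qed

lemma RR_pos: "RR n > 0"
proof -
  have "ln (real n + 2) > 0" by simp
  thus ?thesis unfolding RR_def by simp
qed

lemma main:
  fixes n T C :: nat and \<epsilon> :: real and E :: "nat set set" and f :: "nat \<Rightarrow> nat" and s :: "va_item list"
  assumes e: "0 < \<epsilon>" and e1: "\<epsilon> < 1" and T: "T \<ge> 1" and sg: "simple_graph n E" and col: "coloring n C f"
    and mT: "card (mono_edges E f) \<ge> T" and vs: "va_stream n E f s"
  defines "P \<equiv> bind_pmf (initS n \<epsilon> T) (\<lambda>s0. va_run (updS n \<epsilon> T) s0 s)"
    and "m \<equiv> real (card (mono_edges E f))"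
  shows "(\<forall>tr\<in>set_pmf P. \<forall>st\<in>set tr. \<forall>w\<in>set st. w < (n + C + 2) ^ 1) \<and>
     measure_pmf.prob P {tr. \<bar>outS n \<epsilon> T (last tr) - m\<bar> \<le> \<epsilon> * m} \<ge> 1 - 1 / real n powr 1 \<and>
     measure_pmf.prob P {tr. real (space_used tr)
        \<le> 200 * ln (real n + 2) powr 1 * (1 / \<epsilon>) powr 2 * min (real n) ((real n)\<^sup>2 / real T)}
       \<ge> 1 - 1 / real n powr 1"
proof -
  obtain \<sigma> L where ds: "distinct \<sigma>" and st: "set \<sigma> = {0..<n}"
    and LL: "\<forall>i<n. distinct (L i) \<and> set (L i) = {u \<in> set (take i \<sigma>). {u, \<sigma> ! i} \<in> E}"
    and s: "s = concat (map (\<lambda>i. Vtx (\<sigma> ! i) (f (\<sigma> ! i)) # map (\<lambda>u. Edg u (\<sigma> ! i)) (L i)) [0..<n])"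
    using vs unfolding va_stream_def by blast
  define M where "M = mono_edges E f"
  have Mc: "card M \<ge> 1" using mT T unfolding M_def by simp
  hence Mfin: "finite M" by (simp add: card_ge_0_finite)
  obtain e0 where e0: "e0 \<in> M" using Mc by (metis card.empty ex_in_conv not_one_le_zero)
  hence "e0 \<in> E" unfolding M_def mono_edges_def by simp
  then obtain x y where "e0 = {x,y}" "x \<noteq> y" "x < n" "y < n" using sg unfolding simple_graph_def by blast
  hence n2: "n \<ge> 2" by linarith
  hence n0: "n > 0" by simp
  have Msub: "M \<subseteq> (\<lambda>p. {fst p, snd p}) ` ({..<n} \<times> {..<n})"
  proof
    fix e assume "e \<in> M"
    hence "e \<in> E" unfolding M_def mono_edges_def by simp
    then obtain u v where "e = {u,v}" "u < n" "v < n" using sg unfolding simple_graph_def by blast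
    thus "e \<in> (\<lambda>p. {fst p, snd p}) ` ({..<n} \<times> {..<n})" by force
  qed
  have "card M \<le> card ((\<lambda>p. {fst p, snd p}) ` ({..<n} \<times> {..<n}))" by (rule card_mono[OF _ Msub]) simp
  also have "\<dots> \<le> card ({..<n} \<times> {..<n})" by (rule card_image_le) simp
  finally have Mn: "card M \<le> n * n" by simp
  have Tn: "real T \<le> (real n)^2"
  proof -
    have "T \<le> n * n" using mT Mn unfolding M_def by linarith
    hence "real T \<le> real (n * n)" by linarith
    thus ?thesis by (simp add: power2_eq_square)
  qed
  have sumd: "(\<Sum>a<n. dd n f \<sigma> L a) = card M" unfolding M_def by (rule sum_dd[OF ds st LL sg])
  have dle: "\<And>u. dd n f \<sigma> L u \<le> n" by (rule dd_le[OF ds st LL])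
  have okI: "\<forall>x\<in>set s. okI (n + C) x" by (rule items_ok[OF ds st LL s col])
  have Pe: "P = map_pmf (\<lambda>A. map flat (trc (stepA n) A s)) (initA n \<epsilon> T)"
    unfolding P_def by (rule P_eq)
  have final: "\<And>ids. cnts (last (map flat (trc (stepA n) (A0 ids) s))) = map (dd n f \<sigma> L) ids"
    unfolding last_P cnts_flat A0_def by (rule final_counts[OF ds st LL s])
  have supp: "\<And>tr. tr \<in> set_pmf P \<Longrightarrow> \<exists>ids. tr = map flat (trc (stepA n) (A0 ids) s) \<and> (\<forall>a\<in>set ids. a < n)
      \<and> length ids = (if n \<le> kk n \<epsilon> T then n else RR n * kk n \<epsilon> T)"
  proof -
    fix tr assume "tr \<in> set_pmf P"
    then obtain A where A: "A \<in> set_pmf (initA n \<epsilon> T)" "tr = map flat (trc (stepA n) A s)"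
      unfolding Pe by auto
    then show "?thesis tr" using initA_support[OF A(1) n0] by blast
  qed
  have words: "\<forall>tr\<in>set_pmf P. \<forall>st\<in>set tr. \<forall>w\<in>set st. w < (n + C + 2) ^ 1"
  proof (intro ballI)
    fix tr st w assume tr: "tr \<in> set_pmf P" and stt: "st \<in> set tr" and w: "w \<in> set st"
    obtain ids where ids: "tr = map flat (trc (stepA n) (A0 ids) s)" "\<forall>a\<in>set ids. a < n"
      using supp[OF tr] by blast
    obtain st' where st': "st' \<in> set (trc (stepA n) (A0 ids) s)" "st = flat st'" using stt ids(1) by auto
    have "okA (n + C) (A0 ids)" by (rule okA_A0) (use ids(2) in auto)
    hence "okA (n + C) st'" using okA_trc[OF _ okI _ st'(1)] by simp
    hence "w \<le> n + C" using okA_flat w st'(2) by blast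
    thus "w < (n + C + 2) ^ 1" by simp
  qed
  have space: "measure_pmf.prob P {tr. real (space_used tr)
        \<le> 200 * ln (real n + 2) powr 1 * (1 / \<epsilon>) powr 2 * min (real n) ((real n)\<^sup>2 / real T)} = 1"
  proof (rule prob1, intro ballI)
    fix tr assume tr: "tr \<in> set_pmf P"
    obtain ids where ids: "tr = map flat (trc (stepA n) (A0 ids) s)"
      "length ids = (if n \<le> kk n \<epsilon> T then n else RR n * kk n \<epsilon> T)"
      using supp[OF tr] by blast
    have "space_used tr = 2 + 3 * (if n \<le> kk n \<epsilon> T then n else RR n * kk n \<epsilon> T)"
      unfolding ids(1) space_trc using ids(2) by (simp add: A0_def)
    thus "tr \<in> {tr. real (space_used tr)
        \<le> 200 * ln (real n + 2) powr 1 * (1 / \<epsilon>) powr 2 * min (real n) ((real n)\<^sup>2 / real T)}"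
      using space_bound[OF n2 e e1 T Tn] by simp
  qed
  have pn: "1 / real n powr 1 = 1 / real n" using n0 by simp
  have acc: "measure_pmf.prob P {tr. \<bar>outS n \<epsilon> T (last tr) - m\<bar> \<le> \<epsilon> * m} \<ge> 1 - 1 / real n"
  proof (cases "n \<le> kk n \<epsilon> T")
    case True
    have "measure_pmf.prob P {tr. \<bar>outS n \<epsilon> T (last tr) - m\<bar> \<le> \<epsilon> * m} = 1"
    proof (rule prob1, intro ballI)
      fix tr assume tr: "tr \<in> set_pmf P"
      hence tr': "tr = map flat (trc (stepA n) (A0 [0..<n]) s)"
        unfolding Pe initA_def using True by simp
      have "outS n \<epsilon> T (last tr) = real (sum_list (map (dd n f \<sigma> L) [0..<n]))"
        unfolding outS_def tr' final using True by simp
      also have "sum_list (map (dd n f \<sigma> L) [0..<n]) = (\<Sum>a<n. dd n f \<sigma> L a)"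
        by (simp add: sum_list_distinct_conv_sum_set atLeast0LessThan)
      finally have "outS n \<epsilon> T (last tr) = m" unfolding m_def sumd M_def by simp
      thus "tr \<in> {tr. \<bar>outS n \<epsilon> T (last tr) - m\<bar> \<le> \<epsilon> * m}" using e unfolding m_def by simp
    qed
    thus ?thesis by simp
  next
    case False
    define k where "k = kk n \<epsilon> T"
    define R where "R = RR n"
    define Q where "Q = Pi_pmf {..<k} (0::nat) (\<lambda>_. pmf_of_set {..<n})"
    define X where "X = (\<lambda>h::nat\<Rightarrow>nat. real n / real k * (\<Sum>i<k. real (dd n f \<sigma> L (h i))))"
    define bad where "bad = (\<lambda>h. \<not> \<bar>X h - m\<bar> \<le> \<epsilon> * m)"
    have GG: "GG n \<epsilon> T = Pi_pmf {..<R} (\<lambda>_. 0) (\<lambda>_. Q)" unfolding GG_def R_def k_def Q_def ..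
    have Pg: "P = map_pmf (\<lambda>g. map flat (trc (stepA n) (A0 (ids0 R k g)) s)) (GG n \<epsilon> T)"
      unfolding Pe initA_def using False by (simp add: pmf.map_comp o_def R_def k_def)
    have x0: "4 * (real n)^2 / (\<epsilon>^2 * real T) > 0" using n0 e T by simp
    have kx: "real k \<ge> 4 * (real n)^2 / (\<epsilon>^2 * real T)" unfolding k_def kk_def by linarith
    hence k0: "k > 0" using x0 by linarith
    have Qbad: "measure_pmf.prob Q {h. bad h} \<le> 1/4"
      unfolding bad_def X_def m_def Q_def M_def[symmetric]
      by (rule copy_bad[OF n0 sumd dle k0 _ T e kx]) (use mT M_def in simp)
    have out: "\<And>g. outS n \<epsilon> T (last (map flat (trc (stepA n) (A0 (ids0 R k g)) s))) = median (map (\<lambda>r. X (g r)) [0..<R])"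
    proof -
      fix g
      have "\<And>r i. r < R \<Longrightarrow> i < k \<Longrightarrow> map (dd n f \<sigma> L) (ids0 R k g) ! (r * k + i) = dd n f \<sigma> L (g r i)"
      proof -
        fix r i assume ri: "r < R" "i < k"
        have lt: "r * k + i < R * k"
        proof -
          have "r * k + i < r * k + k" using ri by simp
          also have "\<dots> = Suc r * k" by simp
          also have "\<dots> \<le> R * k" using ri by (intro mult_right_mono) auto
          finally show ?thesis .
        qed
        have "(r * k + i) div k = r" "(r * k + i) mod k = i" using ri by auto
        thus "map (dd n f \<sigma> L) (ids0 R k g) ! (r * k + i) = dd n f \<sigma> L (g r i)"
          using lt unfolding ids0_def by simp
      qed
      thus "?thesis g"
        unfolding outS_def final using False unfolding k_def[symmetric] R_def[symmetric] X_def
        by (auto intro!: arg_cong[where f=median] map_cong sum.cong)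
    qed
    have good: "{g. \<not> R \<le> 2 * card {r\<in>{..<R}. bad (g r)}}
        \<subseteq> {g. \<bar>outS n \<epsilon> T (last (map flat (trc (stepA n) (A0 (ids0 R k g)) s))) - m\<bar> \<le> \<epsilon> * m}"
    proof
      fix g assume "g \<in> {g. \<not> R \<le> 2 * card {r\<in>{..<R}. bad (g r)}}"
      hence few: "2 * card {r\<in>{..<R}. bad (g r)} < R" by simp
      have "length (filter (\<lambda>x. \<not> (m - \<epsilon> * m \<le> x \<and> x \<le> m + \<epsilon> * m)) (map (\<lambda>r. X (g r)) [0..<R]))
          = card {r\<in>{..<R}. bad (g r)}"
        unfolding length_filter_conv_card bad_def
        by (intro arg_cong[where f=card]) (auto simp: abs_le_iff)
      hence "m - \<epsilon> * m \<le> median (map (\<lambda>r. X (g r)) [0..<R]) \<and> median (map (\<lambda>r. X (g r)) [0..<R]) \<le> m + \<epsilon> * m"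
        using few RR_pos[of n] unfolding R_def by (intro median_good) auto
      thus "g \<in> {g. \<bar>outS n \<epsilon> T (last (map flat (trc (stepA n) (A0 (ids0 R k g)) s))) - m\<bar> \<le> \<epsilon> * m}"
        unfolding out by (simp add: abs_le_iff)
    qed
    have "measure_pmf.prob P {tr. \<bar>outS n \<epsilon> T (last tr) - m\<bar> \<le> \<epsilon> * m}
        = measure_pmf.prob (GG n \<epsilon> T) {g. \<bar>outS n \<epsilon> T (last (map flat (trc (stepA n) (A0 (ids0 R k g)) s))) - m\<bar> \<le> \<epsilon> * m}"
      unfolding Pg by (simp add: vimage_def)
    also have "\<dots> \<ge> measure_pmf.prob (GG n \<epsilon> T) {g. \<not> R \<le> 2 * card {r\<in>{..<R}. bad (g r)}}"
      by (rule measure_pmf.finite_measure_mono[OF good]) simp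
    moreover have "measure_pmf.prob (GG n \<epsilon> T) {g. \<not> R \<le> 2 * card {r\<in>{..<R}. bad (g r)}}
        = 1 - measure_pmf.prob (GG n \<epsilon> T) {g. R \<le> 2 * card {r\<in>{..<R}. bad (g r)}}"
    proof -
      have "{g. \<not> R \<le> 2 * card {r\<in>{..<R}. bad (g r)}} = UNIV - {g. R \<le> 2 * card {r\<in>{..<R}. bad (g r)}}" by auto
      thus ?thesis using measure_pmf.prob_compl[of "{g. R \<le> 2 * card {r\<in>{..<R}. bad (g r)}}" "GG n \<epsilon> T"] by simp
    qed
    moreover have "measure_pmf.prob (GG n \<epsilon> T) {g. R \<le> 2 * card {r\<in>{..<R}. bad (g r)}} \<le> exp (- real R / 8)"
      unfolding GG by (rule median_amp[OF Qbad]) (simp add: R_def RR_pos)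
    moreover have "exp (- real R / 8) \<le> 1 / real n" unfolding R_def by (rule exp_bound[OF n0])
    ultimately show ?thesis by linarith
  qed
  show ?thesis using words acc space pn by simp
qed



theorem theorem3p1:
  shows "\<exists>(K::nat) (c::real) (a::real) (b::real) (D::real)
           (init :: nat \<Rightarrow> real \<Rightarrow> nat \<Rightarrow> nat list pmf)
           (upd :: nat \<Rightarrow> real \<Rightarrow> nat \<Rightarrow> nat list \<Rightarrow> va_item \<Rightarrow> nat list pmf)
           (out :: nat \<Rightarrow> real \<Rightarrow> nat \<Rightarrow> nat list \<Rightarrow> real).
     c > 0 \<and>
     (\<forall>(n::nat) (\<epsilon>::real) (T::nat) (C::nat) (E::nat set set) (f::nat \<Rightarrow> nat) (s::va_item list).
        0 < \<epsilon> \<and> \<epsilon> < 1 \<and> T \<ge> 1 \<and> simple_graph n E \<and> coloring n C f \<and>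
        card (mono_edges E f) \<ge> T \<and> va_stream n E f s \<longrightarrow>
        (let P = bind_pmf (init n \<epsilon> T) (\<lambda>s0. va_run (upd n \<epsilon> T) s0 s);
             m = real (card (mono_edges E f))
         in (\<forall>tr\<in>set_pmf P. \<forall>st\<in>set tr. \<forall>w\<in>set st. w < (n + C + 2) ^ K) \<and>
            measure_pmf.prob P {tr. \<bar>out n \<epsilon> T (last tr) - m\<bar> \<le> \<epsilon> * m}
              \<ge> 1 - 1 / real n powr c \<and>
            measure_pmf.prob P
              {tr. real (space_used tr)
                     \<le> D * ln (real n + 2) powr a * (1 / \<epsilon>) powr b
                         * min (real n) ((real n)\<^sup>2 / real T)}
              \<ge> 1 - 1 / real n powr c))"
  apply (rule exI[of _ "1::nat"])
  apply (rule exI[of _ "1::real"])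
  apply (rule exI[of _ "1::real"])
  apply (rule exI[of _ "2::real"])
  apply (rule exI[of _ "200::real"])
  apply (rule exI[of _ initS])
  apply (rule exI[of _ updS])
  apply (rule exI[of _ outS])
  apply (intro conjI allI impI)
   apply simp
  apply (elim conjE)
  unfolding Let_def
  apply (rule main)
        apply assumption+
  done

end
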